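(* Let $k$ be a field, $V$ a finite-dimensional $k$-vector space, $A$ a finite arrangement of linear hyperplanes in $V$ with intersection lattice $L$ and natural sheaf $F$, and let $\widetilde L$ be the Boolean cover of $L$. Then $$\chi_q\,\mathrm{HC}_*(\widetilde L;\Lambda^\bullet F)=\chi_L(1+q).$$
   Context: $L$ consists of all intersections of subsets of $A$ (empty intersection $=V$), ordered by reverse inclusion, with minimum $\mathbf{0}=V$; atoms are the hyperplanes. Möbius function: $\mu_L(x,x)=1$, $\mu_L(x,y)=-\sum_{x\le z<y}\mu_L(x,z)$; $\chi_L(t)=\sum_{x\in L}\mu_L(\mathbf{0},x)t^{\dim x}$. A sheaf assigns a vector space $G(x)$ to each element and a linear map $G^y_x:G(y)\to G(x)$ to each $x\le y$, functorially. Natural sheaf: $F(x)=x$, $F^y_x$ the inclusion $y\subseteq x$; $\Lambda^jF$ has $(\Lambda^jF)(x)=\Lambda^j(F(x))$, maps $\Lambda^j(F^y_x)$; $\Lambda^\bullet F=\bigoplus_{j\ge0}\Lambda^jF$. Graded Euler characteristic: $\chi_q\,\mathrm{HC}_*(\widetilde L;\Lambda^\bullet F)=\sum_{k\ge0}q^k\sum_n(-1)^n\dim\mathrm{HC}_n(\widetilde L;\Lambda^kF)$. Boolean cover: $\widetilde L$ is the lattice of subsets of $A$ under inclusion, $f(S)=\bigcap_{a\in S}a$, induced sheaf $G(S)=G(f(S))$ with maps $G^{f(T)}_{f(S)}$. Cellular homology of a Boolean lattice of subsets of $\{a_1,\dots,a_n\}$ with sheaf $G$: homology of $C_k=\bigoplus_{|x|=k}G(x)$,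 $d=\sum\varepsilon^x_yG^x_y$ over $y\subset x$, $|y|=|x|-1$, with $\varepsilon^x_y=(-1)^{j-1}$ when $x=\{a_{i_1},\dots,a_{i_k}\}$ ($i_1<\cdots<i_k$), $y=x\setminus\{a_{i_j}\}$. *)

theory Defs
  imports Main "HOL-Library.Function_Algebras" "HOL-Combinatorics.Permutations"
    "HOL-Computational_Algebra.Polynomial"
begin

definition fscale :: "'k::field \<Rightarrow> ('a \<Rightarrow> 'k) \<Rightarrow> ('a \<Rightarrow> 'k)" where
  "fscale c f = (\<lambda>x. c * f x)"

definition cscale :: "'k::field \<Rightarrow> ('a \<Rightarrow> 'b \<Rightarrow> 'k) \<Rightarrow> ('a \<Rightarrow> 'b \<Rightarrow> 'k)" where
  "cscale c F = (\<lambda>S I. c * F S I)"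

(* V = k^n, vectors as nat-indexed functions supported in {..<n} *)
definition ambient :: "nat \<Rightarrow> (nat \<Rightarrow> 'k::field) set" where
  "ambient n = {v. \<forall>i\<ge>n. v i = 0}"

definition hyperplane :: "nat \<Rightarrow> (nat \<Rightarrow> 'k::field) set \<Rightarrow> bool" where
  "hyperplane n H \<longleftrightarrow> (\<exists>a\<in>ambient n. a \<noteq> 0 \<and>
      H = {v \<in> ambient n. (\<Sum>i<n. a i * v i) = 0})"

(* The arrangement A is given as a list of distinct hyperplanes, i.e. with an enumeration a_1..a_N *)
definition arrangement :: "nat \<Rightarrow> (nat \<Rightarrow> 'k::field) set list \<Rightarrow> bool" where
  "arrangement n as \<longleftrightarrow> distinct as \<and> (\<forall>H\<in>set as. hyperplane n H)"

(* f(S) = intersection of the hyperplanes indexed by S (empty intersection = V) *)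
definition isect :: "nat \<Rightarrow> (nat \<Rightarrow> 'k::field) set list \<Rightarrow> nat set \<Rightarrow> (nat \<Rightarrow> 'k) set" where
  "isect n as S = ambient n \<inter> \<Inter> ((!) as ` S)"

definition lattice :: "nat \<Rightarrow> (nat \<Rightarrow> 'k::field) set list \<Rightarrow> (nat \<Rightarrow> 'k) set set" where
  "lattice n as = isect n as ` Pow {..<length as}"

definition subspace_dim :: "(nat \<Rightarrow> 'k::field) set \<Rightarrow> nat" where
  "subspace_dim W = vector_space.dim (fscale :: 'k \<Rightarrow> (nat \<Rightarrow> 'k) \<Rightarrow> _) W"

(* Moebius function mu_L(0, -) on L ordered by reverse inclusion, 0 = V:
   mu(0,0) = 1, mu(0,y) = - sum_{0 <= z < y} mu(0,z)  (z < y iff y strictly contained in z) *)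
definition mobius0 :: "nat \<Rightarrow> (nat \<Rightarrow> 'k::field) set list \<Rightarrow> (nat \<Rightarrow> 'k) set \<Rightarrow> int" where
  "mobius0 n as = (THE m. (\<forall>y. y \<notin> lattice n as \<longrightarrow> m y = 0) \<and>
     (\<forall>y\<in>lattice n as. m y = (if y = ambient n then 1
        else - (\<Sum>z\<in>{z\<in>lattice n as. y \<subset> z}. m z))))"

definition char_poly :: "nat \<Rightarrow> (nat \<Rightarrow> 'k::field) set list \<Rightarrow> int poly" where
  "char_poly n as = (\<Sum>x\<in>lattice n as. monom (mobius0 n as x) (subspace_dim x))"

(* Exterior power Lambda^j(k^n) modelled as functions on j-subsets of {..<n}
   (Pluecker coordinates); wedge of v_0..v_{j-1} has the j x j minors as coordinates *)
definition wedge :: "nat \<Rightarrow> nat \<Rightarrow> (nat \<Rightarrow> nat \<Rightarrow> 'k::field) \<Rightarrow> nat set \<Rightarrow> 'k" where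
  "wedge n j vs I = (if I \<subseteq> {..<n} \<and> card I = j then
      (\<Sum>p | p permutes {..<j}. of_int (sign p) *
          (\<Prod>a<j. vs a (sorted_list_of_set I ! p a)))
    else 0)"

(* Lambda^j(W) for a subspace W of V, as a subspace of Lambda^j(V);
   the maps Lambda^j(F^y_x) are then the inclusions *)
definition ext_pow :: "nat \<Rightarrow> nat \<Rightarrow> (nat \<Rightarrow> 'k::field) set \<Rightarrow> (nat set \<Rightarrow> 'k) set" where
  "ext_pow n j W = module.span fscale {wedge n j vs | vs. \<forall>a<j. vs a \<in> W}"

(* cellular chains of the Boolean cover with coefficients in Lambda^j F:
   C_m = (+)_{S subset of {0..N-1}, |S| = m} Lambda^j(f(S)) *)
definition chains :: "nat \<Rightarrow> (nat \<Rightarrow> 'k::field) set list \<Rightarrow> nat \<Rightarrow> nat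
     \<Rightarrow> (nat set \<Rightarrow> nat set \<Rightarrow> 'k) set" where
  "chains n as j m = {c. (\<forall>S. S \<subseteq> {..<length as} \<and> card S = m \<longrightarrow> c S \<in> ext_pow n j (isect n as S))
      \<and> (\<forall>S. \<not> (S \<subseteq> {..<length as} \<and> card S = m) \<longrightarrow> c S = 0)}"

(* cellular boundary: (d c)(T) = sum_{x = T + {a_i}} eps^x_T c(x), eps = (-1)^{position of i in x - 1} *)
definition bdry :: "nat \<Rightarrow> (nat set \<Rightarrow> nat set \<Rightarrow> 'k::field) \<Rightarrow> (nat set \<Rightarrow> nat set \<Rightarrow> 'k)" where
  "bdry N c = (\<lambda>T I. \<Sum>i\<in>{..<N} - T. (-1) ^ card {t\<in>T. t < i} * c (insert i T) I)"

definition cycles :: "nat \<Rightarrow> (nat \<Rightarrow> 'k::field) set list \<Rightarrow> nat \<Rightarrow> nat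
     \<Rightarrow> (nat set \<Rightarrow> nat set \<Rightarrow> 'k) set" where
  "cycles n as j m = {c \<in> chains n as j m. bdry (length as) c = 0}"

definition boundaries :: "nat \<Rightarrow> (nat \<Rightarrow> 'k::field) set list \<Rightarrow> nat \<Rightarrow> nat
     \<Rightarrow> (nat set \<Rightarrow> nat set \<Rightarrow> 'k) set" where
  "boundaries n as j m = bdry (length as) ` chains n as j (Suc m)"

definition homology_dim :: "nat \<Rightarrow> (nat \<Rightarrow> 'k::field) set list \<Rightarrow> nat \<Rightarrow> nat \<Rightarrow> int" where
  "homology_dim n as j m =
     int (vector_space.dim (cscale :: 'k \<Rightarrow> _) (cycles n as j m))
   - int (vector_space.dim (cscale :: 'k \<Rightarrow> _) (boundaries n as j m))"

(* coefficient of q^j in the graded Euler characteristic; chain groups vanish in degrees > |A| *)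
definition euler_coeff :: "nat \<Rightarrow> (nat \<Rightarrow> 'k::field) set list \<Rightarrow> nat \<Rightarrow> int" where
  "euler_coeff n as j = (\<Sum>m\<le>length as. (-1) ^ m * homology_dim n as j m)"

end

theory Submission
  imports Defs
begin


interpretation fsv: vector_space "fscale :: 'k::field \<Rightarrow> ('a \<Rightarrow> 'k) \<Rightarrow> ('a \<Rightarrow> 'k)"
  by unfold_locales (auto simp: fscale_def fun_eq_iff algebra_simps)

interpretation csv: vector_space "cscale :: 'k::field \<Rightarrow> ('a \<Rightarrow> 'b \<Rightarrow> 'k) \<Rightarrow> ('a \<Rightarrow> 'b \<Rightarrow> 'k)"
  by unfold_locales (auto simp: cscale_def fun_eq_iff algebra_simps)

lemma (in vector_space) spanning_card_le_dim_indep: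
  assumes fin: "finite B" and BV: "B \<subseteq> V" and sp: "V \<subseteq> span B" and c: "card B \<le> dim V"
  shows "independent B"
proof (rule ccontr)
  assume "\<not> independent B"
  then obtain a where a: "a \<in> B" "a \<in> span (B - {a})" using dependent_def by blast
  have "B \<subseteq> span (B - {a})"
  proof
    fix b assume "b \<in> B" then show "b \<in> span (B - {a})"
      using a by (cases "b = a") (auto intro: span_base)
  qed
  then have "span B \<subseteq> span (B - {a})" by (rule span_minimal) simp
  then have "V \<subseteq> span (B - {a})" using sp by blast
  then have "dim V \<le> card (B - {a})" using fin by (intro dim_le_card) auto
  moreover have "card (B - {a}) < card B" using fin a(1) by (rule card_Diff1_less)
  ultimately show False using c by linarith
qed

lemma (in vector_space_pair) rank_nullity:
  assumes lf: "Vector_Spaces.linear s1 s2 f" and V: "vs1.subspace V" and fin: "finite B0" "V \<subseteq> vs1.span B0"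
  shows "vs1.dim V = vs2.dim (f ` V) + vs1.dim {x\<in>V. f x = 0}"
proof -
  define K where "K = {x\<in>V. f x = 0}"
  have Ksub: "K \<subseteq> V" unfolding K_def by blast
  obtain BK where BK: "BK \<subseteq> K" "vs1.independent BK" "K \<subseteq> vs1.span BK" "card BK = vs1.dim K"
    by (rule vs1.basis_exists)
  obtain B where B: "BK \<subseteq> B" "B \<subseteq> V" "vs1.independent B" "V \<subseteq> vs1.span B"
    using vs1.maximal_independent_subset_extend[of BK V] BK Ksub by blast
  have finB: "finite B" using vs1.independent_span_bound[OF fin(1) B(3)] B(2) fin(2) by blast
  have cardB: "card B = vs1.dim V" using vs1.basis_card_eq_dim B by blast
  define C where "C = B - BK"
  have spV: "vs1.span V = V" using V by simp
  have key: False if c: "c \<in> C" and y: "y \<in> vs1.span (C - {c})" and e: "f c = f y" for c y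
  proof -
    have cV: "c \<in> V" using c B(2) C_def by blast
    have "vs1.span (C - {c}) \<subseteq> V" using B(2) C_def V by (intro vs1.span_minimal) auto
    then have yV: "y \<in> V" using y by blast
    have "f (c - y) = 0" using e linear_diff[OF lf] by simp
    then have "c - y \<in> K" using cV yV V unfolding K_def by (auto intro: vs1.subspace_diff)
    then have "c - y \<in> vs1.span BK" using BK(3) by blast
    moreover have "vs1.span BK \<subseteq> vs1.span (B - {c})" using c C_def B(1) by (intro vs1.span_mono) auto
    moreover have "vs1.span (C - {c}) \<subseteq> vs1.span (B - {c})" using C_def by (intro vs1.span_mono) auto
    ultimately have "(c - y) + y \<in> vs1.span (B - {c})" using y by (meson subsetD vs1.span_add)
    then have "c \<in> vs1.span (B - {c})" by simp
    then show False using B(3) vs1.dependent_def c C_def by blast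
  qed
  have inj: "inj_on f C"
  proof (rule inj_onI, rule ccontr)
    fix c1 c2 assume "c1 \<in> C" "c2 \<in> C" "f c1 = f c2" "c1 \<noteq> c2"
    then show False using key[of c1 c2] by (auto intro: vs1.span_base)
  qed
  have ind: "vs2.independent (f ` C)"
  proof
    assume "vs2.dependent (f ` C)"
    then obtain c where c: "c \<in> C" "f c \<in> vs2.span (f ` C - {f c})" unfolding vs2.dependent_def by blast
    have "f ` C - {f c} = f ` (C - {c})" using inj c(1) by (auto simp: inj_on_def)
    then have "f c \<in> f ` vs1.span (C - {c})" using c(2) linear_span_image[OF lf] by simp
    then obtain y where "y \<in> vs1.span (C - {c})" "f c = f y" by blast
    then show False using key c(1) by blast
  qed
  have fBK: "f ` BK \<subseteq> {0}" using BK(1) K_def by auto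
  have sp: "f ` V \<subseteq> vs2.span (f ` C)"
  proof -
    have "f ` V \<subseteq> f ` vs1.span B" using B(4) by blast
    also have "\<dots> = vs2.span (f ` B)" using linear_span_image[OF lf] by simp
    also have "\<dots> \<subseteq> vs2.span (insert 0 (f ` C))"
      using fBK C_def by (intro vs2.span_mono) auto
    finally show ?thesis by simp
  qed
  have "vs2.dim (f ` V) = card (f ` C)"
    by (rule vs2.dim_unique[OF _ sp ind refl]) (use C_def B(2) in auto)
  also have "\<dots> = card C" using inj by (simp add: card_image)
  also have "\<dots> = card B - card BK" unfolding C_def using B(1) finB by (simp add: card_Diff_subset finite_subset)
  finally have "vs2.dim (f ` V) = card B - card BK" .
  moreover have "card BK \<le> card B" using B(1) finB card_mono by blast
  ultimately show ?thesis using cardB BK(4) unfolding K_def by linarith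
qed



lemma sum_fun_apply: "(\<Sum>x\<in>t. g x) i = (\<Sum>x\<in>t. g x i)"
  by (induction t rule: infinite_finite_induct) auto

lemma fscale_apply [simp]: "fscale c f i = c * f i"
  by (simp add: fscale_def)

lemma wedge_out: "\<not> (I \<subseteq> {..<n} \<and> card I = j) \<Longrightarrow> wedge n j vs I = 0"
  unfolding wedge_def by (simp only: if_False)

lemma wedge_in: "I \<subseteq> {..<n} \<Longrightarrow> card I = j \<Longrightarrow> wedge n j vs I =
   (\<Sum>p | p permutes {..<j}. of_int (sign p) * (\<Prod>a<j. vs a (sorted_list_of_set I ! p a)))"
  unfolding wedge_def by simp

lemma wedge_cong:
  assumes "\<And>a. a < j \<Longrightarrow> vs a = vs' a"
  shows "wedge n j vs = wedge n j vs'"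
  using assms by (auto simp: wedge_def fun_eq_iff intro!: sum.cong prod.cong)

lemma wedge_linear:
  assumes k: "k < j" and t: "finite t"
  shows "wedge n j (vs(k := (\<Sum>x\<in>t. fscale (r x) x)))
       = (\<Sum>x\<in>t. fscale (r x) (wedge n j (vs(k := x))))"
proof (rule ext)
  fix I :: "nat set"
  define s where "s = sorted_list_of_set I"
  define P where "P = {p. p permutes {..<j}}"
  define R where "R p = (\<Prod>a\<in>{..<j}-{k}. vs a (s ! p a))" for p
  have split: "(\<Prod>a<j. (vs(k:=v)) a (s ! p a)) = v (s ! p k) * R p" for v p
  proof -
    have "(\<Prod>a<j. (vs(k:=v)) a (s ! p a)) = (vs(k:=v)) k (s ! p k) * (\<Prod>a\<in>{..<j}-{k}. (vs(k:=v)) a (s ! p a))"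
      using k by (intro prod.remove) auto
    also have "(\<Prod>a\<in>{..<j}-{k}. (vs(k:=v)) a (s ! p a)) = R p"
      unfolding R_def by (intro prod.cong) auto
    finally show ?thesis by simp
  qed
  show "wedge n j (vs(k := (\<Sum>x\<in>t. fscale (r x) x))) I
       = (\<Sum>x\<in>t. fscale (r x) (wedge n j (vs(k := x)))) I"
  proof (cases "I \<subseteq> {..<n} \<and> card I = j")
    case False
    then show ?thesis by (simp add: wedge_out sum_fun_apply)
  next
    case True
    have "wedge n j (vs(k := (\<Sum>x\<in>t. fscale (r x) x))) I
        = (\<Sum>p\<in>P. of_int (sign p) * (\<Prod>a<j. (vs(k := (\<Sum>x\<in>t. fscale (r x) x))) a (s ! p a)))"
      using True by (simp add: wedge_in s_def P_def del: fun_upd_apply)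
    also have "\<dots> = (\<Sum>p\<in>P. of_int (sign p) * ((\<Sum>x\<in>t. fscale (r x) x) (s ! p k) * R p))"
      by (simp only: split)
    also have "\<dots> = (\<Sum>p\<in>P. of_int (sign p) * ((\<Sum>x\<in>t. r x * x (s ! p k)) * R p))"
      by (simp add: sum_fun_apply)
    also have "\<dots> = (\<Sum>p\<in>P. \<Sum>x\<in>t. r x * (of_int (sign p) * (x (s ! p k) * R p)))"
      by (simp add: sum_distrib_left sum_distrib_right mult_ac)
    also have "\<dots> = (\<Sum>x\<in>t. \<Sum>p\<in>P. r x * (of_int (sign p) * (x (s ! p k) * R p)))"
      by (rule sum.swap)
    also have "\<dots> = (\<Sum>x\<in>t. r x * (\<Sum>p\<in>P. of_int (sign p) * (\<Prod>a<j. (vs(k := x)) a (s ! p a))))"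
      by (simp only: split sum_distrib_left mult_ac)
    also have "\<dots> = (\<Sum>x\<in>t. fscale (r x) (wedge n j (vs(k := x))) I)"
      using True by (simp add: wedge_in s_def P_def del: fun_upd_apply)
    finally show ?thesis by (simp add: sum_fun_apply)
  qed
qed

lemma wedge_permute:
  assumes pi: "\<pi> permutes {..<j}"
  shows "wedge n j (\<lambda>a. vs (\<pi> a)) = fscale (of_int (sign \<pi>)) (wedge n j vs)"
proof (rule ext)
  fix I :: "nat set"
  define s where "s = sorted_list_of_set I"
  define P where "P = {p. p permutes {..<j}}"
  define Q where "Q p = (\<Prod>b<j. vs b (s ! p b))" for p
  have fin: "finite {..<j}" by simp
  have permpi: "permutation \<pi>" using permutes_imp_permutation[OF fin pi] .
  have re: "(\<Prod>a<j. vs (\<pi> a) (s ! p a)) = Q (p \<circ> inv \<pi>)" for p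
  proof -
    have "(\<Prod>a<j. vs (\<pi> a) (s ! p a)) = (\<Prod>a<j. (\<lambda>b. vs b (s ! (p \<circ> inv \<pi>) b)) (\<pi> a))"
      by (simp add: permutes_inverses[OF pi])
    also have "\<dots> = Q (p \<circ> inv \<pi>)" unfolding Q_def
      by (rule prod.reindex_bij_betw[OF permutes_imp_bij[OF pi]])
    finally show ?thesis .
  qed
  have bij: "bij_betw (\<lambda>q. q \<circ> \<pi>) P P"
  proof (rule bij_betwI[where g = "\<lambda>q. q \<circ> inv \<pi>"])
    show "(\<lambda>q. q \<circ> \<pi>) \<in> P \<rightarrow> P" using pi by (auto simp: P_def intro: permutes_compose)
    show "(\<lambda>q. q \<circ> inv \<pi>) \<in> P \<rightarrow> P" using pi by (auto simp: P_def intro: permutes_compose permutes_inv)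
    show "x \<circ> \<pi> \<circ> inv \<pi> = x" for x by (simp add: o_assoc[symmetric] permutes_inv_o[OF pi])
    show "y \<circ> inv \<pi> \<circ> \<pi> = y" for y by (simp add: o_assoc[symmetric] permutes_inv_o[OF pi])
  qed
  show "wedge n j (\<lambda>a. vs (\<pi> a)) I = fscale (of_int (sign \<pi>)) (wedge n j vs) I"
  proof (cases "I \<subseteq> {..<n} \<and> card I = j")
    case False
    then show ?thesis by (simp add: wedge_out)
  next
    case True
    have "wedge n j (\<lambda>a. vs (\<pi> a)) I = (\<Sum>p\<in>P. of_int (sign p) * (\<Prod>a<j. vs (\<pi> a) (s ! p a)))"
      using True by (simp add: wedge_in s_def P_def)
    also have "\<dots> = (\<Sum>p\<in>P. of_int (sign p) * Q (p \<circ> inv \<pi>))"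
      by (simp only: re)
    also have "\<dots> = (\<Sum>q\<in>P. of_int (sign (q \<circ> \<pi>)) * Q (q \<circ> \<pi> \<circ> inv \<pi>))"
      by (rule sum.reindex_bij_betw[OF bij, symmetric])
    also have "\<dots> = (\<Sum>q\<in>P. of_int (sign \<pi>) * (of_int (sign q) * Q q))"
    proof (rule sum.cong[OF refl])
      fix q assume "q \<in> P"
      then have "permutation q" using permutes_imp_permutation[OF fin] by (auto simp: P_def)
      then show "of_int (sign (q \<circ> \<pi>)) * Q (q \<circ> \<pi> \<circ> inv \<pi>) = of_int (sign \<pi>) * (of_int (sign q) * Q q)"
        using permpi by (simp add: sign_compose o_assoc[symmetric] permutes_inv_o[OF pi])
    qed
    also have "\<dots> = fscale (of_int (sign \<pi>)) (wedge n j vs) I"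
      using True by (simp add: wedge_in s_def P_def Q_def sum_distrib_left)
    finally show ?thesis .
  qed
qed

lemma wedge_eq_rows:
  assumes ab: "a < j" "b < j" "a \<noteq> b" and eq: "vs a = vs b"
  shows "wedge n j vs = 0"
proof (rule ext)
  fix I :: "nat set"
  define s where "s = sorted_list_of_set I"
  define P where "P = {p. p permutes {..<j}}"
  define Q where "Q p = (\<Prod>c<j. vs c (s ! p c))" for p
  define F where "F p = of_int (sign p) * Q p" for p
  define t where "t = transpose a b"
  have fin: "finite {..<j}" by simp
  have tP: "t permutes {..<j}" unfolding t_def using ab by (intro permutes_swap_id) auto
  have tperm: "permutation t" unfolding t_def by (rule permutation_swap_id)
  have Qt: "Q (p \<circ> t) = Q p" for p
  proof -
    have "Q (p \<circ> t) = (\<Prod>c<j. (\<lambda>c. vs (t c) (s ! p c)) (t c))"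
      by (simp add: Q_def t_def)
    also have "\<dots> = (\<Prod>c<j. vs (t c) (s ! p c))"
      by (rule prod.reindex_bij_betw[OF permutes_imp_bij[OF tP]])
    also have "\<dots> = Q p" unfolding Q_def
      by (intro prod.cong refl) (auto simp: t_def transpose_def eq)
    finally show ?thesis .
  qed
  have Ft: "F (p \<circ> t) = - F p" if "p \<in> P" for p
  proof -
    have "permutation p" using that permutes_imp_permutation[OF fin] by (auto simp: P_def)
    moreover have "sign t = -1" using ab by (simp add: t_def sign_swap_id)
    ultimately show ?thesis using tperm by (simp add: F_def Qt sign_compose)
  qed
  define E where "E = {p\<in>P. evenperm p}"
  define Od where "Od = {p\<in>P. \<not> evenperm p}"
  have finP: "finite P" unfolding P_def by (rule finite_permutations) simp
  have bij: "bij_betw (\<lambda>p. p \<circ> t) E Od"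
  proof (rule bij_betwI[where g = "\<lambda>p. p \<circ> t"])
    have ev: "evenperm (p \<circ> t) \<longleftrightarrow> \<not> evenperm p" if "p \<in> P" for p
    proof -
      have "permutation p" using that permutes_imp_permutation[OF fin] by (auto simp: P_def)
      then show ?thesis using ab tperm by (simp add: evenperm_comp evenperm_swap t_def)
    qed
    show "(\<lambda>p. p \<circ> t) \<in> E \<rightarrow> Od" using ev tP by (auto simp: E_def Od_def P_def intro: permutes_compose)
    show "(\<lambda>p. p \<circ> t) \<in> Od \<rightarrow> E" using ev tP by (auto simp: E_def Od_def P_def intro: permutes_compose)
    show "x \<circ> t \<circ> t = x" for x by (simp add: t_def o_assoc[symmetric])
    show "y \<circ> t \<circ> t = y" for y by (simp add: t_def o_assoc[symmetric])
  qed
  have PE: "P = E \<union> Od" "E \<inter> Od = {}" by (auto simp: E_def Od_def)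
  have finEO: "finite E" "finite Od" using finP by (auto simp: E_def Od_def)
  have "(\<Sum>p\<in>P. F p) = (\<Sum>p\<in>E. F p) + (\<Sum>p\<in>Od. F p)"
    unfolding PE(1) using finEO PE(2) by (rule sum.union_disjoint)
  also have "(\<Sum>p\<in>Od. F p) = (\<Sum>p\<in>E. F (p \<circ> t))"
    by (rule sum.reindex_bij_betw[OF bij, symmetric])
  also have "\<dots> = (\<Sum>p\<in>E. - F p)" by (intro sum.cong refl) (auto simp: E_def Ft)
  finally have "(\<Sum>p\<in>P. F p) = 0" by (simp add: sum_negf)
  then show "wedge n j vs I = 0 I"
    by (simp add: wedge_def F_def Q_def P_def s_def)
qed



definition unitv :: "nat \<Rightarrow> nat \<Rightarrow> 'k::field" where
  "unitv i = (\<lambda>k. if k = i then 1 else 0)"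

definition delta :: "nat set \<Rightarrow> nat set \<Rightarrow> 'k::field" where
  "delta I0 = (\<lambda>I. if I = I0 then 1 else 0)"

definition Jset :: "nat \<Rightarrow> nat \<Rightarrow> nat set set" where
  "Jset m j = {J. J \<subseteq> {..<m} \<and> card J = j}"

definition wJ :: "nat \<Rightarrow> nat \<Rightarrow> (nat \<Rightarrow> nat \<Rightarrow> 'k::field) \<Rightarrow> nat set \<Rightarrow> nat set \<Rightarrow> 'k" where
  "wJ n j u J = wedge n j (\<lambda>a. u (sorted_list_of_set J ! a))"

lemma permutes_id_iff:
  assumes "p permutes {..<j}" "\<forall>a<j. p a = a" shows "p = id"
  using assms by (auto simp: permutes_def fun_eq_iff)

lemma wedge_unit:
  assumes I0: "I0 \<subseteq> {..<n}" "card I0 = j"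
  shows "wedge n j (\<lambda>a. unitv (sorted_list_of_set I0 ! a)) = (delta I0 :: nat set \<Rightarrow> 'k::field)"
proof (rule ext)
  fix I :: "nat set"
  define s0 where "s0 = sorted_list_of_set I0"
  have fin0: "finite I0" using I0(1) finite_subset by blast
  have s0: "length s0 = j" "distinct s0" "set s0 = I0" using fin0 I0(2) by (auto simp: s0_def)
  define P where "P = {p. p permutes {..<j}}"
  show "wedge n j (\<lambda>a. unitv (s0 ! a)) I = (delta I0 :: nat set \<Rightarrow> 'k) I"
  proof (cases "I = I0")
    case True
    have hterm: "of_int (sign p) * (\<Prod>a<j. unitv (s0 ! a) (s0 ! p a)) = (if p = id then 1 else (0::'k))" if p: "p \<in> P" for p
    proof (cases "p = id")
      case True then show ?thesis by (simp add: unitv_def)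
    next
      case False
      then obtain a where a: "a < j" "p a \<noteq> a" using permutes_id_iff p by (auto simp: P_def)
      have "p a < j" using p a(1) permutes_in_image[of p "{..<j}" a] by (simp add: P_def)
      then have "s0 ! p a \<noteq> s0 ! a" using a s0 by (simp add: nth_eq_iff_index_eq)
      then have z: "unitv (s0 ! a) (s0 ! p a) = (0::'k)" by (simp add: unitv_def)
      have "(\<Prod>a<j. unitv (s0 ! a) (s0 ! p a)) = (0::'k)"
        by (rule prod_zero) (use z a(1) in auto)
      then show ?thesis using False by simp
    qed
    have "(wedge n j (\<lambda>a. unitv (s0 ! a)) I :: 'k) = (\<Sum>p\<in>P. of_int (sign p) * (\<Prod>a<j. unitv (s0 ! a) (s0 ! p a)))"
      using True I0 by (simp add: wedge_in P_def s0_def)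
    also have "\<dots> = (\<Sum>p\<in>P. if p = id then 1 else 0)"
      by (rule sum.cong[OF refl]) (erule hterm)
    also have "\<dots> = 1" by (simp add: P_def permutes_id finite_permutations)
    finally show ?thesis using True by (simp add: delta_def)
  next
    case False
    show ?thesis
    proof (cases "I \<subseteq> {..<n} \<and> card I = j")
      case False
      then show ?thesis using \<open>I \<noteq> I0\<close> by (simp add: wedge_out delta_def)
    next
      case True
      define s where "s = sorted_list_of_set I"
      have finI: "finite I" using True finite_subset by blast
      have s: "length s = j" "set s = I" using finI True by (auto simp: s_def)
      have "\<not> I0 \<subseteq> I" using card_subset_eq[OF finI] True I0 \<open>I \<noteq> I0\<close> by metis
      then obtain x where x: "x \<in> I0" "x \<notin> I" by blast
      then obtain a where a: "a < j" "s0 ! a = x" using s0 by (metis in_set_conv_nth)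
      have zz: "(\<Prod>c<j. unitv (s0 ! c) (s ! p c)) = (0::'k)" if p: "p \<in> P" for p
      proof -
        have "p a < j" using p a(1) permutes_in_image[of p "{..<j}" a] by (simp add: P_def)
        then have "s ! p a \<in> I" using s by (metis nth_mem)
        then have "unitv (s0 ! a) (s ! p a) = (0::'k)" using x a by (auto simp: unitv_def)
        then show ?thesis using a(1) by (intro prod_zero) auto
      qed
      have "(wedge n j (\<lambda>a. unitv (s0 ! a)) I :: 'k) = (\<Sum>p\<in>P. of_int (sign p) * (\<Prod>c<j. unitv (s0 ! c) (s ! p c)))"
        unfolding wedge_in[OF conjunct1[OF True] conjunct2[OF True]] P_def s_def ..
      also have "\<dots> = 0"
        by (rule sum.neutral) (use zz in simp)
      finally have "(wedge n j (\<lambda>a. unitv (s0 ! a)) I :: 'k) = 0" .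
      then show ?thesis using \<open>I \<noteq> I0\<close> by (simp add: delta_def)
    qed
  qed
qed

lemma wedge_base_span:
  fixes u :: "nat \<Rightarrow> nat \<Rightarrow> 'k::field"
  assumes vs: "\<forall>a<j. vs a \<in> u ` {..<m}"
  shows "wedge n j vs \<in> fsv.span (wJ n j u ` Jset m j)"
proof -
  have "\<forall>a. \<exists>i. a < j \<longrightarrow> i < m \<and> vs a = u i" using vs by blast
  from choice[OF this] obtain g where g: "\<forall>a<j. g a < m \<and> vs a = u (g a)" by blast
  have eq: "wedge n j vs = wedge n j (\<lambda>a. u (g a))" using g by (intro wedge_cong) auto
  show ?thesis
  proof (cases "inj_on g {..<j}")
    case False
    then obtain a b where "a < j" "b < j" "a \<noteq> b" "g a = g b" by (auto simp: inj_on_def)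
    then have "wedge n j (\<lambda>a. u (g a)) = 0" by (intro wedge_eq_rows[of a j b]) auto
    then show ?thesis using eq fsv.span_zero by simp
  next
    case True
    define J where "J = g ` {..<j}"
    have J: "J \<subseteq> {..<m}" "card J = j" using g True by (auto simp: J_def card_image)
    define s where "s = sorted_list_of_set J"
    have finJ: "finite J" unfolding J_def by simp
    have s: "length s = j" "distinct s" "set s = J" using finJ J by (auto simp: s_def)
    define \<pi> where "\<pi> a = (if a < j then (THE b. b < length s \<and> s ! b = g a) else a)" for a
    have gin: "g a \<in> set s" if "a < j" for a using that s(3) by (auto simp: J_def)
    have pis2: "\<pi> a < j \<and> s ! \<pi> a = g a" if "a < j" for a
      using theI'[OF distinct_Ex1[OF s(2) gin[OF that]]] that s(1) by (simp add: \<pi>_def)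
    have pis: "s ! \<pi> a = g a" if "a < j" for a using pis2[OF that] by simp
    have inj: "inj_on \<pi> {..<j}"
    proof (rule inj_onI)
      fix a b assume "a \<in> {..<j}" "b \<in> {..<j}" "\<pi> a = \<pi> b"
      then have "g a = g b" using pis by (metis lessThan_iff)
      then show "a = b" using True \<open>a \<in> {..<j}\<close> \<open>b \<in> {..<j}\<close> by (auto simp: inj_on_def)
    qed
    have sub: "\<pi> ` {..<j} \<subseteq> {..<j}" using pis2 by auto
    have "\<pi> ` {..<j} = {..<j}" by (rule endo_inj_surj[OF _ sub inj]) simp
    then have bij: "bij_betw \<pi> {..<j} {..<j}" using inj by (simp add: bij_betw_def)
    have perm: "\<pi> permutes {..<j}" by (rule bij_imp_permutes[OF bij]) (simp add: \<pi>_def)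
    have "wedge n j (\<lambda>a. u (g a)) = wedge n j (\<lambda>a. (\<lambda>b. u (s ! b)) (\<pi> a))"
      using pis by (intro wedge_cong) auto
    also have "\<dots> = fscale (of_int (sign \<pi>)) (wJ n j u J)"
      using wedge_permute[OF perm, of n "\<lambda>b. u (s ! b)"] by (simp add: wJ_def s_def)
    finally have "wedge n j vs = fscale (of_int (sign \<pi>)) (wJ n j u J)" using eq by simp
    moreover have "wJ n j u J \<in> fsv.span (wJ n j u ` Jset m j)"
      using J by (intro fsv.span_base) (auto simp: Jset_def)
    ultimately show ?thesis by (simp add: fsv.span_scale)
  qed
qed

lemma wedge_in_span:
  fixes u :: "nat \<Rightarrow> nat \<Rightarrow> 'k::field"
  assumes vs: "\<forall>a<j. vs a \<in> fsv.span (u ` {..<m})"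
  shows "wedge n j vs \<in> fsv.span (wJ n j u ` Jset m j)"
proof -
  let ?U = "u ` {..<m}" and ?S = "fsv.span (wJ n j u ` Jset m j)"
  have "\<forall>vs. (\<forall>a<j. vs a \<in> fsv.span ?U) \<and> (\<forall>a. k \<le> a \<and> a < j \<longrightarrow> vs a \<in> ?U) \<longrightarrow> wedge n j vs \<in> ?S" for k
  proof (induction k)
    case 0
    show ?case
    proof (intro allI impI)
      fix vs :: "nat \<Rightarrow> nat \<Rightarrow> 'k"
      assume "(\<forall>a<j. vs a \<in> fsv.span ?U) \<and> (\<forall>a. 0 \<le> a \<and> a < j \<longrightarrow> vs a \<in> ?U)"
      then have "\<forall>a<j. vs a \<in> ?U" by auto
      then show "wedge n j vs \<in> ?S" by (rule wedge_base_span)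
    qed
  next
    case (Suc k)
    show ?case
    proof (intro allI impI)
      fix vs :: "nat \<Rightarrow> nat \<Rightarrow> 'k"
      assume h: "(\<forall>a<j. vs a \<in> fsv.span ?U) \<and> (\<forall>a. Suc k \<le> a \<and> a < j \<longrightarrow> vs a \<in> ?U)"
      show "wedge n j vs \<in> ?S"
      proof (cases "k < j")
        case False
        then have "\<forall>a. k \<le> a \<and> a < j \<longrightarrow> vs a \<in> ?U" by auto
        then show ?thesis using h by (intro Suc.IH[rule_format] conjI) auto
      next
        case True
        have "vs k \<in> fsv.span ?U" using h True by blast
        then obtain t r where tr: "finite t" "t \<subseteq> ?U" "vs k = (\<Sum>x\<in>t. fscale (r x) x)"
          unfolding fsv.span_explicit by blast
        have vsu: "vs(k := (\<Sum>x\<in>t. fscale (r x) x)) = vs"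
          by (rule fun_upd_idem[where f=vs and x=k, OF tr(3)])
        have "wedge n j vs = wedge n j (vs(k := (\<Sum>x\<in>t. fscale (r x) x)))"
          by (simp only: vsu)
        also have "\<dots> = (\<Sum>x\<in>t. fscale (r x) (wedge n j (vs(k := x))))"
          by (rule wedge_linear[OF True tr(1)])
        also have "\<dots> \<in> ?S"
        proof (intro fsv.span_sum fsv.span_scale)
          fix x assume x: "x \<in> t"
          have xs: "x \<in> fsv.span ?U" using x tr(2) by (blast intro: fsv.span_base)
          have "\<forall>a<j. (vs(k := x)) a \<in> fsv.span ?U" using h xs by auto
          moreover have "\<forall>a. k \<le> a \<and> a < j \<longrightarrow> (vs(k := x)) a \<in> ?U" using h x tr(2) by auto
          ultimately show "wedge n j (vs(k := x)) \<in> ?S" by (intro Suc.IH[rule_format] conjI)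
        qed
        finally show ?thesis .
      qed
    qed
  qed
  from this[of j] show ?thesis using vs by auto
qed



lemma finite_Jset [simp]: "finite (Jset m j)"
  unfolding Jset_def by (rule finite_subset[of _ "Pow {..<m}"]) auto

lemma card_Jset: "card (Jset m j) = m choose j"
  unfolding Jset_def using n_subsets[of "{..<m}" j] by simp

lemma Jset_mono: "d \<le> m \<Longrightarrow> Jset d j \<subseteq> Jset m j"
  unfolding Jset_def by auto

lemma eval_sum:
  assumes "finite D" "d0 \<in> D" "\<forall>x\<in>D. x \<noteq> d0 \<longrightarrow> x p = 0" "d0 p = 1"
  shows "(\<Sum>x\<in>D. fscale (f x) x) p = (f d0 :: 'k::field)"
proof -
  have "(\<Sum>x\<in>D. fscale (f x) x) p = (\<Sum>x\<in>D. f x * x p)" by (simp add: sum_fun_apply)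
  also have "\<dots> = f d0 * d0 p + (\<Sum>x\<in>D - {d0}. f x * x p)" using assms(1,2) by (rule sum.remove)
  also have "\<dots> = f d0"
  proof -
    have "(\<Sum>x\<in>D - {d0}. f x * x p) = 0" using assms(3) by (intro sum.neutral) auto
    then show ?thesis using assms(4) by simp
  qed
  finally show ?thesis .
qed

lemma indep_eval:
  fixes D :: "('a \<Rightarrow> 'k::field) set"
  assumes fin: "finite D" and ev: "\<forall>d\<in>D. \<exists>p. d p = 1 \<and> (\<forall>x\<in>D. x \<noteq> d \<longrightarrow> x p = 0)"
  shows "fsv.independent D"
proof (rule fsv.independent_if_scalars_zero[OF fin])
  fix f x assume s: "(\<Sum>x\<in>D. fscale (f x) x) = 0" and x: "x \<in> D"
  obtain p where p: "x p = 1" "\<forall>y\<in>D. y \<noteq> x \<longrightarrow> y p = 0" using ev x by blast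
  have "(\<Sum>x\<in>D. fscale (f x) x) p = f x" using eval_sum[OF fin x] p by blast
  then show "f x = 0" using s by simp
qed

lemma subspace_ambient: "fsv.subspace (ambient n)"
  unfolding fsv.subspace_def ambient_def by (auto simp: fscale_def)

lemma unitv_ambient: "i < n \<Longrightarrow> unitv i \<in> ambient n"
  by (auto simp: ambient_def unitv_def)

lemma ambient_span: "ambient n = fsv.span (unitv ` {..<n} :: (nat \<Rightarrow> 'k::field) set)"
proof
  show "ambient n \<subseteq> fsv.span (unitv ` {..<n} :: (nat \<Rightarrow> 'k::field) set)"
  proof
    fix v :: "nat \<Rightarrow> 'k" assume v: "v \<in> ambient n"
    have "v = (\<Sum>i<n. fscale (v i) (unitv i))"
    proof (rule ext)
      fix k
      have "(\<Sum>i<n. fscale (v i) (unitv i)) k = (\<Sum>i<n. if i = k then v k else 0)"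
        unfolding sum_fun_apply by (intro sum.cong refl) (simp add: unitv_def)
      also have "\<dots> = v k"
        using v by (cases "k < n") (simp_all add: ambient_def)
      finally show "v k = (\<Sum>i<n. fscale (v i) (unitv i)) k" by simp
    qed
    also have "\<dots> \<in> fsv.span (unitv ` {..<n})"
      by (intro fsv.span_sum fsv.span_scale fsv.span_base) auto
    finally show "v \<in> fsv.span (unitv ` {..<n})" .
  qed
  show "fsv.span (unitv ` {..<n}) \<subseteq> ambient n"
    by (rule fsv.span_minimal) (auto simp: unitv_ambient subspace_ambient)
qed

lemma unitv_indep: "fsv.independent (unitv ` {..<n} :: (nat \<Rightarrow> 'k::field) set)"
proof (rule indep_eval)
  show "\<forall>d\<in>unitv ` {..<n}. \<exists>p. (d :: nat \<Rightarrow> 'k) p = 1 \<and> (\<forall>x\<in>unitv ` {..<n}. x \<noteq> d \<longrightarrow> x p = 0)"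
    by (auto simp: unitv_def)
qed simp

lemma inj_unitv: "inj (unitv :: nat \<Rightarrow> nat \<Rightarrow> 'k::field)"
  by (rule injI) (auto simp: unitv_def fun_eq_iff split: if_splits)

lemma dim_ambient: "fsv.dim (ambient n :: (nat \<Rightarrow> 'k::field) set) = n"
proof -
  have "fsv.dim (ambient n :: (nat \<Rightarrow> 'k::field) set) = card (unitv ` {..<n} :: (nat \<Rightarrow> 'k::field) set)"
    unfolding ambient_span fsv.dim_span by (rule fsv.dim_eq_card_independent[OF unitv_indep])
  also have "\<dots> = n" by (simp add: card_image[OF inj_on_subset[OF inj_unitv subset_UNIV]])
  finally show ?thesis .
qed

lemma wedge_expand: "wedge n j vs = (\<Sum>I\<in>Jset n j. fscale (wedge n j vs I) (delta I))"
proof (rule ext)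
  fix I :: "nat set"
  show "wedge n j vs I = (\<Sum>I\<in>Jset n j. fscale (wedge n j vs I) (delta I)) I"
  proof (cases "I \<in> Jset n j")
    case True
    have "(\<Sum>I'\<in>Jset n j. fscale (wedge n j vs I') (delta I')) I = (\<Sum>I'\<in>Jset n j. if I = I' then wedge n j vs I' else 0)"
      unfolding sum_fun_apply by (intro sum.cong refl) (simp add: delta_def)
    also have "\<dots> = wedge n j vs I" using True by (simp add: sum.delta)
    finally show ?thesis by simp
  next
    case False
    then have "wedge n j vs I = 0" by (intro wedge_out) (auto simp: Jset_def)
    moreover have "(\<Sum>I\<in>Jset n j. fscale (wedge n j vs I) (delta I)) I = 0"
      unfolding sum_fun_apply using False by (intro sum.neutral) (auto simp: delta_def)
    ultimately show ?thesis by simp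
  qed
qed

lemma delta_indep: "fsv.independent (delta ` Jset n j :: (nat set \<Rightarrow> 'k::field) set)"
proof (rule indep_eval)
  show "\<forall>d\<in>delta ` Jset n j. \<exists>p. (d :: nat set \<Rightarrow> 'k) p = 1 \<and> (\<forall>x\<in>delta ` Jset n j. x \<noteq> d \<longrightarrow> x p = 0)"
    by (auto simp: delta_def)
qed simp

lemma inj_delta: "inj (delta :: nat set \<Rightarrow> nat set \<Rightarrow> 'k::field)"
  by (rule injI) (auto simp: delta_def fun_eq_iff split: if_splits)

lemma ext_pow_ambient_span:
  "ext_pow n j (ambient n) = fsv.span (delta ` Jset n j :: (nat set \<Rightarrow> 'k::field) set)"
proof
  show "ext_pow n j (ambient n) \<subseteq> fsv.span (delta ` Jset n j :: (nat set \<Rightarrow> 'k::field) set)"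
    unfolding ext_pow_def
  proof (rule fsv.span_minimal)
    show "{wedge n j vs |vs. \<forall>a<j. vs a \<in> ambient n} \<subseteq> fsv.span (delta ` Jset n j :: (nat set \<Rightarrow> 'k::field) set)"
    proof
      fix w assume "w \<in> {wedge n j vs |vs. \<forall>a<j. (vs a :: nat \<Rightarrow> 'k) \<in> ambient n}"
      then obtain vs :: "nat \<Rightarrow> nat \<Rightarrow> 'k" where w: "w = wedge n j vs" by blast
      show "w \<in> fsv.span (delta ` Jset n j)"
        unfolding w
        by (subst wedge_expand) (intro fsv.span_sum fsv.span_scale fsv.span_base, auto)
    qed
  qed simp
  show "fsv.span (delta ` Jset n j :: (nat set \<Rightarrow> 'k::field) set) \<subseteq> ext_pow n j (ambient n)"
    unfolding ext_pow_def
  proof (rule fsv.span_mono)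
    show "delta ` Jset n j \<subseteq> {wedge n j vs |vs. \<forall>a<j. (vs a :: nat \<Rightarrow> 'k) \<in> ambient n}"
    proof
      fix d :: "nat set \<Rightarrow> 'k" assume "d \<in> delta ` Jset n j"
      then obtain I0 where I0: "I0 \<in> Jset n j" "d = delta I0" by blast
      then have I0': "I0 \<subseteq> {..<n}" "card I0 = j" by (auto simp: Jset_def)
      have fin: "finite I0" using I0' finite_subset by blast
      have "\<forall>a<j. unitv (sorted_list_of_set I0 ! a) \<in> (ambient n :: (nat \<Rightarrow> 'k) set)"
      proof (intro allI impI unitv_ambient)
        fix a assume "a < j"
        moreover have "length (sorted_list_of_set I0) = j" "set (sorted_list_of_set I0) = I0"
          using fin I0'(2) by auto
        ultimately have "sorted_list_of_set I0 ! a \<in> I0" by (metis nth_mem)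
        then show "sorted_list_of_set I0 ! a < n" using I0' by auto
      qed
      moreover have "d = wedge n j (\<lambda>a. unitv (sorted_list_of_set I0 ! a))"
        by (simp add: I0(2) wedge_unit[OF I0'])
      ultimately show "d \<in> {wedge n j vs |vs. \<forall>a<j. (vs a :: nat \<Rightarrow> 'k) \<in> ambient n}"
        by (intro CollectI exI[of _ "\<lambda>a. unitv (sorted_list_of_set I0 ! a)"]) simp
    qed
  qed
qed

lemma dim_ext_pow_ambient:
  "fsv.dim (ext_pow n j (ambient n) :: (nat set \<Rightarrow> 'k::field) set) = n choose j"
proof -
  have "fsv.dim (ext_pow n j (ambient n) :: (nat set \<Rightarrow> 'k::field) set) = card (delta ` Jset n j :: (nat set \<Rightarrow> 'k::field) set)"
    unfolding ext_pow_ambient_span fsv.dim_span by (rule fsv.dim_eq_card_independent[OF delta_indep])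
  also have "\<dots> = n choose j" by (simp add: card_image[OF inj_on_subset[OF inj_delta subset_UNIV]] card_Jset)
  finally show ?thesis .
qed



lemma wJ_in_gens:
  assumes J: "J \<in> Jset m j" and u: "\<forall>i<m. u i \<in> X"
  shows "wJ n j u J \<in> {wedge n j vs |vs. \<forall>a<j. vs a \<in> X}"
proof -
  have J': "J \<subseteq> {..<m}" "card J = j" using J by (auto simp: Jset_def)
  have fin: "finite J" using J' finite_subset by blast
  have len: "length (sorted_list_of_set J) = j" "set (sorted_list_of_set J) = J" using fin J' by auto
  have "\<forall>a<j. u (sorted_list_of_set J ! a) \<in> X"
  proof (intro allI impI)
    fix a assume "a < j"
    then have "sorted_list_of_set J ! a \<in> J" using len by (metis nth_mem)
    then show "u (sorted_list_of_set J ! a) \<in> X" using u J' by auto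
  qed
  then show ?thesis unfolding wJ_def
    by (intro CollectI exI[of _ "\<lambda>a. u (sorted_list_of_set J ! a)"]) simp
qed

lemma dim_ext_pow:
  fixes W :: "(nat \<Rightarrow> 'k::field) set"
  assumes W: "W \<subseteq> ambient n"
  shows "fsv.dim (ext_pow n j W) = fsv.dim W choose j \<and> (\<exists>B. finite B \<and> ext_pow n j W \<subseteq> fsv.span B)"
proof -
  obtain BW where BW: "BW \<subseteq> W" "fsv.independent BW" "W \<subseteq> fsv.span BW" "card BW = fsv.dim W"
    by (rule fsv.basis_exists)
  obtain B where B: "BW \<subseteq> B" "B \<subseteq> ambient n" "fsv.independent B" "ambient n \<subseteq> fsv.span B"
    using fsv.maximal_independent_subset_extend[of BW "ambient n"] BW W by blast
  have "B \<subseteq> fsv.span (unitv ` {..<n})" using B(2) ambient_span by blast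
  then have finB: "finite B"
    using fsv.independent_span_bound[OF finite_imageI[of "{..<n}" unitv] B(3)] by blast
  have cardB: "card B = n"
    using fsv.basis_card_eq_dim[OF B(2) B(4) B(3)] dim_ambient by simp
  define d where "d = card BW"
  have finBW: "finite BW" using finB B(1) finite_subset by blast
  have dle: "d \<le> n" unfolding d_def using cardB card_mono[OF finB B(1)] by simp
  obtain f1 where f1: "bij_betw f1 {0..<d} BW" using ex_bij_betw_nat_finite[OF finBW] d_def by blast
  obtain f2 where f2: "bij_betw f2 {0..<card (B - BW)} (B - BW)"
    using ex_bij_betw_nat_finite[of "B - BW"] finB by blast
  have cBB: "card (B - BW) = n - d" using card_Diff_subset[OF finBW B(1)] cardB d_def by simp
  define u where "u i = (if i < d then f1 i else f2 (i - d))" for i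
  have f1i: "f1 i \<in> BW" if "i < d" for i using f1 that by (auto simp: bij_betw_def)
  have f2i: "f2 i \<in> B - BW" if "i < n - d" for i using f2 that cBB by (auto simp: bij_betw_def)
  have uW: "u ` {..<d} = BW"
  proof
    show "u ` {..<d} \<subseteq> BW" using f1i by (auto simp: u_def)
    show "BW \<subseteq> u ` {..<d}"
    proof
      fix x assume "x \<in> BW"
      then obtain i where "i < d" "x = f1 i" using f1 by (auto simp: bij_betw_def)
      then show "x \<in> u ` {..<d}" by (auto simp: u_def)
    qed
  qed
  have uB: "u ` {..<n} = B"
  proof
    show "u ` {..<n} \<subseteq> B"
    proof
      fix x assume "x \<in> u ` {..<n}"
      then obtain i where i: "i < n" "x = u i" by blast
      show "x \<in> B"
      proof (cases "i < d")
        case True then show ?thesis using i f1i B(1) by (auto simp: u_def)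
      next
        case False then have "i - d < n - d" using i by simp
        then show ?thesis using i f2i False by (auto simp: u_def)
      qed
    qed
    show "B \<subseteq> u ` {..<n}"
    proof
      fix x assume x: "x \<in> B"
      show "x \<in> u ` {..<n}"
      proof (cases "x \<in> BW")
        case True then show ?thesis using uW dle by auto
      next
        case False
        then have "x \<in> B - BW" using x by blast
        then have "x \<in> f2 ` {0..<n - d}" using f2 cBB by (simp add: bij_betw_def)
        then obtain i where i: "i < n - d" "x = f2 i" by auto
        then have "u (i + d) = x" by (simp add: u_def)
        moreover have "i + d < n" using i by simp
        ultimately show ?thesis by force
      qed
    qed
  qed
  define V where "V = (ext_pow n j (ambient n) :: (nat set \<Rightarrow> 'k) set)"
  define G where "G = wJ n j u ` Jset n j"
  have u_amb: "\<forall>i<n. u i \<in> ambient n" using uB B(2) by auto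
  have GV: "G \<subseteq> V"
  proof
    fix g assume "g \<in> G"
    then obtain J where J: "J \<in> Jset n j" "g = wJ n j u J" unfolding G_def by blast
    show "g \<in> V" unfolding V_def ext_pow_def J(2)
      by (rule fsv.span_base[OF wJ_in_gens[OF J(1) u_amb]])
  qed
  have VG: "V \<subseteq> fsv.span G" unfolding V_def ext_pow_def
  proof (rule fsv.span_minimal)
    show "{wedge n j vs |vs. \<forall>a<j. (vs a :: nat \<Rightarrow> 'k) \<in> ambient n} \<subseteq> fsv.span G"
    proof
      fix w assume "w \<in> {wedge n j vs |vs. \<forall>a<j. (vs a :: nat \<Rightarrow> 'k) \<in> ambient n}"
      then obtain vs where w: "w = wedge n j vs" "\<forall>a<j. vs a \<in> ambient n" by blast
      have "\<forall>a<j. vs a \<in> fsv.span (u ` {..<n})" using w(2) B(4) uB by auto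
      then show "w \<in> fsv.span G" unfolding w(1) G_def by (rule wedge_in_span)
    qed
  qed simp
  have finG: "finite G" unfolding G_def by simp
  have cardG: "card G \<le> fsv.dim V"
    using card_image_le[OF finite_Jset, of "wJ n j u" n j]
    unfolding G_def V_def by (simp add: card_Jset dim_ext_pow_ambient)
  have indG: "fsv.independent G" by (rule fsv.spanning_card_le_dim_indep[OF finG GV VG cardG])
  have "card G = fsv.dim V" by (rule fsv.basis_card_eq_dim[OF GV VG indG])
  then have "card G = card (Jset n j)" unfolding V_def by (simp add: card_Jset dim_ext_pow_ambient)
  then have inj: "inj_on (wJ n j u) (Jset n j)" unfolding G_def by (rule eq_card_imp_inj_on[OF finite_Jset])
  define GW where "GW = wJ n j u ` Jset d j"
  have GWG: "GW \<subseteq> G" unfolding GW_def G_def using Jset_mono[OF dle] by blast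
  have indGW: "fsv.independent GW" using fsv.independent_mono[OF indG GWG] .
  have uWd: "\<forall>i<d. u i \<in> W" using uW BW(1) by auto
  have eq: "ext_pow n j W = fsv.span GW"
  proof
    show "ext_pow n j W \<subseteq> fsv.span GW" unfolding ext_pow_def
    proof (rule fsv.span_minimal)
      show "{wedge n j vs |vs. \<forall>a<j. vs a \<in> W} \<subseteq> fsv.span GW"
      proof
        fix w assume "w \<in> {wedge n j vs |vs. \<forall>a<j. vs a \<in> W}"
        then obtain vs where w: "w = wedge n j vs" "\<forall>a<j. vs a \<in> W" by blast
        have "\<forall>a<j. vs a \<in> fsv.span (u ` {..<d})" using w(2) BW(3) uW by auto
        then show "w \<in> fsv.span GW" unfolding w(1) GW_def by (rule wedge_in_span)
      qed
    qed simp
    show "fsv.span GW \<subseteq> ext_pow n j W" unfolding ext_pow_def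
    proof (rule fsv.span_mono)
      show "GW \<subseteq> {wedge n j vs |vs. \<forall>a<j. vs a \<in> W}"
        unfolding GW_def using wJ_in_gens[OF _ uWd] by blast
    qed
  qed
  have "fsv.dim (ext_pow n j W) = card GW" unfolding eq by (rule fsv.dim_span_eq_card_independent[OF indGW])
  also have "\<dots> = card (Jset d j)" unfolding GW_def
    by (rule card_image[OF inj_on_subset[OF inj Jset_mono[OF dle]]])
  also have "\<dots> = fsv.dim W choose j" using card_Jset BW(4) d_def by simp
  finally show ?thesis using eq finite_imageI[OF finite_Jset, of "wJ n j u" d j] GW_def by blast
qed



declare fscale_apply[simp del]

definition prodsp :: "('a \<Rightarrow> ('b \<Rightarrow> 'k::field) set) \<Rightarrow> 'a set \<Rightarrow> ('a \<Rightarrow> 'b \<Rightarrow> 'k) set" where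
  "prodsp V X = {c. (\<forall>S\<in>X. c S \<in> V S) \<and> (\<forall>S. S \<notin> X \<longrightarrow> c S = 0)}"

interpretation cf: vector_space_pair "cscale :: 'k::field \<Rightarrow> ('a \<Rightarrow> 'b \<Rightarrow> 'k) \<Rightarrow> _" "fscale :: 'k::field \<Rightarrow> ('b \<Rightarrow> 'k) \<Rightarrow> _" ..

interpretation cc: vector_space_pair "cscale :: 'k::field \<Rightarrow> ('a \<Rightarrow> 'b \<Rightarrow> 'k) \<Rightarrow> _" "cscale :: 'k::field \<Rightarrow> ('a \<Rightarrow> 'b \<Rightarrow> 'k) \<Rightarrow> _" ..

lemma cscale_apply: "cscale c F S I = c * F S I"
  by (simp add: cscale_def)

lemma csv_dim_zero: "csv.dim {0} = 0"
  by (rule csv.dim_unique[of "{}"]) (auto simp: csv.independent_empty)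

lemma linear_eval: "Vector_Spaces.linear cscale fscale (\<lambda>c :: 'a \<Rightarrow> 'b \<Rightarrow> 'k::field. c S0)"
  unfolding Vector_Spaces.linear_iff
  by (simp add: fsv.vector_space_axioms csv.vector_space_axioms fun_eq_iff cscale_def fscale_def)

lemma prod_dim:
  fixes V :: "'a \<Rightarrow> ('b \<Rightarrow> 'k::field) set"
  assumes "finite X" "\<forall>S\<in>X. fsv.subspace (V S)" "\<forall>S\<in>X. \<exists>B. finite B \<and> V S \<subseteq> fsv.span B"
  shows "csv.dim (prodsp V X) = (\<Sum>S\<in>X. fsv.dim (V S)) \<and> (\<exists>B. finite B \<and> prodsp V X \<subseteq> csv.span B)
         \<and> csv.subspace (prodsp V X)"
  using assms
proof (induction X rule: finite_induct)
  case empty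
  have "prodsp V {} = {0}" by (auto simp: prodsp_def fun_eq_iff)
  moreover have "csv.subspace {0}" by (simp add: csv.subspace_def cscale_def fun_eq_iff)
  moreover have "{0} \<subseteq> csv.span {}" using csv.span_zero by blast
  ultimately show ?case by (simp only: csv_dim_zero sum.empty) blast
next
  case (insert S0 X)
  let ?Q = "prodsp V (insert S0 X)"
  have IH: "csv.dim (prodsp V X) = (\<Sum>S\<in>X. fsv.dim (V S))" "\<exists>B. finite B \<and> prodsp V X \<subseteq> csv.span B"
    "csv.subspace (prodsp V X)" using insert by auto
  have sub0: "fsv.subspace (V S0)" using insert.prems by auto
  have subQ: "csv.subspace ?Q"
    using insert.prems unfolding csv.subspace_def prodsp_def fsv.subspace_def
    by (auto simp: fun_eq_iff cscale_def fscale_def)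
  define \<iota> where "\<iota> v = (\<lambda>S. if S = S0 then v else 0)" for v :: "'b \<Rightarrow> 'k"
  have img: "(\<lambda>c. c S0) ` ?Q = V S0"
  proof
    show "(\<lambda>c. c S0) ` ?Q \<subseteq> V S0" by (auto simp: prodsp_def)
    show "V S0 \<subseteq> (\<lambda>c. c S0) ` ?Q"
    proof
      fix v assume v: "v \<in> V S0"
      have i1: "\<iota> v \<in> ?Q" using v insert.prems fsv.subspace_0 by (auto simp: prodsp_def \<iota>_def)
      have i2: "v = \<iota> v S0" by (simp add: \<iota>_def)
      show "v \<in> (\<lambda>c. c S0) ` ?Q" by (rule image_eqI[where f = "\<lambda>c. c S0", OF i2 i1])
    qed
  qed
  have ker: "{c \<in> ?Q. c S0 = 0} = prodsp V X"
    using insert.hyps(2) fsv.subspace_0[OF sub0] by (auto simp: prodsp_def)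
  obtain BX where BX: "finite BX" "prodsp V X \<subseteq> csv.span BX" using IH(2) by blast
  obtain B0 where B0: "finite B0" "V S0 \<subseteq> fsv.span B0" using insert.prems by auto
  have spQ: "?Q \<subseteq> csv.span (BX \<union> \<iota> ` B0)"
  proof
    fix c assume c: "c \<in> ?Q"
    have c1: "c(S0 := 0) \<in> prodsp V X" using c insert.hyps(2) by (auto simp: prodsp_def)
    have "c S0 \<in> fsv.span B0" using c B0 by (auto simp: prodsp_def)
    then obtain t r where tr: "finite t" "t \<subseteq> B0" "c S0 = (\<Sum>b\<in>t. fscale (r b) b)"
      unfolding fsv.span_explicit by blast
    have "\<iota> (c S0) = (\<Sum>b\<in>t. cscale (r b) (\<iota> b))"
      unfolding tr(3) by (auto simp: \<iota>_def fun_eq_iff sum_fun_apply fscale_apply cscale_apply)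
    also have "\<dots> \<in> csv.span (BX \<union> \<iota> ` B0)"
      using tr(2) by (intro csv.span_sum csv.span_scale csv.span_base) auto
    finally have a: "\<iota> (c S0) \<in> csv.span (BX \<union> \<iota> ` B0)" .
    have b: "c(S0 := 0) \<in> csv.span (BX \<union> \<iota> ` B0)"
      using c1 BX(2) csv.span_mono[of BX "BX \<union> \<iota> ` B0"] by blast
    have "c = c(S0 := 0) + \<iota> (c S0)" by (auto simp: \<iota>_def fun_eq_iff)
    then show "c \<in> csv.span (BX \<union> \<iota> ` B0)" using csv.span_add[OF b a] by simp
  qed
  have rn: "csv.dim ?Q = fsv.dim ((\<lambda>c. c S0) ` ?Q) + csv.dim {c \<in> ?Q. c S0 = 0}"
    by (rule cf.rank_nullity[OF linear_eval subQ _ spQ]) (use BX B0 in simp)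
  then have "csv.dim ?Q = fsv.dim (V S0) + (\<Sum>S\<in>X. fsv.dim (V S))" unfolding img ker IH(1) .
  then have "csv.dim ?Q = (\<Sum>S\<in>insert S0 X. fsv.dim (V S))" using insert.hyps by simp
  moreover have "\<exists>B. finite B \<and> ?Q \<subseteq> csv.span B" using spQ BX B0 by blast
  ultimately show ?case using subQ by blast
qed



definition Xm :: "nat \<Rightarrow> nat \<Rightarrow> nat set set" where
  "Xm N m = {S. S \<subseteq> {..<N} \<and> card S = m}"

lemma finite_Xm [simp]: "finite (Xm N m)"
  unfolding Xm_def by (rule finite_subset[of _ "Pow {..<N}"]) auto

lemma chains_prodsp:
  "chains n as j m = prodsp (\<lambda>S. ext_pow n j (isect n as S)) (Xm (length as) m)"
  unfolding chains_def prodsp_def Xm_def by auto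

lemma chains_props:
  fixes as :: "(nat \<Rightarrow> 'k::field) set list"
  shows "csv.dim (chains n as j m) = (\<Sum>S\<in>Xm (length as) m. subspace_dim (isect n as S) choose j)
   \<and> (\<exists>B. finite B \<and> chains n as j m \<subseteq> csv.span B) \<and> csv.subspace (chains n as j m)"
proof -
  have amb: "isect n as S \<subseteq> ambient n" for S unfolding isect_def by blast
  have "\<forall>S\<in>Xm (length as) m. fsv.subspace (ext_pow n j (isect n as S))"
    unfolding ext_pow_def by simp
  moreover have "\<forall>S\<in>Xm (length as) m. \<exists>B. finite B \<and> ext_pow n j (isect n as S) \<subseteq> fsv.span B"
    using dim_ext_pow[OF amb] by blast
  ultimately have "csv.dim (chains n as j m) = (\<Sum>S\<in>Xm (length as) m. fsv.dim (ext_pow n j (isect n as S)))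
   \<and> (\<exists>B. finite B \<and> chains n as j m \<subseteq> csv.span B) \<and> csv.subspace (chains n as j m)"
    unfolding chains_prodsp by (intro prod_dim) auto
  moreover have "fsv.dim (ext_pow n j (isect n as S)) = subspace_dim (isect n as S) choose j" for S
    using dim_ext_pow[OF amb] unfolding subspace_dim_def by blast
  ultimately show ?thesis by simp
qed

lemma linear_bdry: "Vector_Spaces.linear cscale cscale (bdry N :: (nat set \<Rightarrow> nat set \<Rightarrow> 'k::field) \<Rightarrow> _)"
  unfolding Vector_Spaces.linear_iff
proof (intro conjI allI)
  show "bdry N (x + y) = bdry N x + bdry N y" for x y :: "nat set \<Rightarrow> nat set \<Rightarrow> 'k"
    by (simp add: fun_eq_iff bdry_def sum.distrib algebra_simps)
  show "bdry N (cscale c x) = cscale c (bdry N x)" for c and x :: "nat set \<Rightarrow> nat set \<Rightarrow> 'k"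
    by (simp add: fun_eq_iff bdry_def cscale_def sum_distrib_left algebra_simps)
qed (simp_all add: csv.vector_space_axioms)

lemma bdry_zero: "bdry N 0 = 0"
  by (simp add: bdry_def fun_eq_iff)

lemma cycles_0:
  fixes as :: "(nat \<Rightarrow> 'k::field) set list"
  shows "cycles n as j 0 = chains n as j 0"
proof -
  have "bdry (length as) c = 0" if c: "c \<in> chains n as j 0" for c :: "nat set \<Rightarrow> nat set \<Rightarrow> 'k"
  proof -
    have c0: "\<forall>S. \<not> (S \<subseteq> {..<length as} \<and> card S = 0) \<longrightarrow> c S = 0"
      using c unfolding chains_def by simp
    have "c (insert i T) = 0" for i T
    proof -
      have "\<not> (insert i T \<subseteq> {..<length as} \<and> card (insert i T) = 0)"
      proof
        assume h: "insert i T \<subseteq> {..<length as} \<and> card (insert i T) = 0"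
        have "finite (insert i T)" using finite_subset[OF conjunct1[OF h] finite_lessThan] .
        with h show False by simp
      qed
      then show ?thesis by (rule c0[rule_format])
    qed
    then show ?thesis by (simp add: bdry_def fun_eq_iff)
  qed
  then show ?thesis unfolding cycles_def by blast
qed

lemma boundaries_top:
  fixes as :: "(nat \<Rightarrow> 'k::field) set list"
  shows "boundaries n as j (length as) = {0}"
proof -
  have "chains n as j (Suc (length as)) = {0}"
  proof -
    have nS: "\<not> (S \<subseteq> {..<length as} \<and> card S = Suc (length as))" for S
    proof
      assume h: "S \<subseteq> {..<length as} \<and> card S = Suc (length as)"
      have "card S \<le> card {..<length as}" using card_mono[OF finite_lessThan conjunct1[OF h]] .
      with h show False by simp
    qed
    have "c = 0" if "c \<in> chains n as j (Suc (length as))" for c :: "nat set \<Rightarrow> nat set \<Rightarrow> 'k"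
    proof
      fix S
      show "c S = 0 S" using that nS[of S] unfolding chains_def by simp
    qed
    moreover have "(0 :: nat set \<Rightarrow> nat set \<Rightarrow> 'k) \<in> chains n as j (Suc (length as))"
    proof -
      have "\<forall>S. S \<subseteq> {..<length as} \<and> card S = Suc (length as) \<longrightarrow> (0 :: nat set \<Rightarrow> nat set \<Rightarrow> 'k) S \<in> ext_pow n j (isect n as S)"
        using nS by blast
      moreover have "\<forall>S. \<not> (S \<subseteq> {..<length as} \<and> card S = Suc (length as)) \<longrightarrow> (0 :: nat set \<Rightarrow> nat set \<Rightarrow> 'k) S = 0"
        by simp
      ultimately show ?thesis unfolding chains_def by blast
    qed
    ultimately show ?thesis by blast
  qed
  then show ?thesis unfolding boundaries_def by (simp add: bdry_zero)
qed

lemma rank_step: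
  fixes as :: "(nat \<Rightarrow> 'k::field) set list"
  shows "csv.dim (chains n as j (Suc m)) = csv.dim (boundaries n as j m) + csv.dim (cycles n as j (Suc m))"
proof -
  note cp = chains_props[of n as j "Suc m"]
  obtain B where B: "finite B" "chains n as j (Suc m) \<subseteq> csv.span B" using conjunct1[OF conjunct2[OF cp]] by (elim exE conjE) (rule that)
  have sub: "csv.subspace (chains n as j (Suc m))" using cp by (rule conjunct2[OF conjunct2])
  have lin: "Vector_Spaces.linear cscale cscale (bdry (length as) :: (nat set \<Rightarrow> nat set \<Rightarrow> 'k) \<Rightarrow> _)"
    by (rule linear_bdry)
  have "csv.dim (chains n as j (Suc m)) = csv.dim (bdry (length as) ` chains n as j (Suc m))
     + csv.dim {x \<in> chains n as j (Suc m). bdry (length as) x = 0}"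
    by (rule cc.rank_nullity[OF lin sub B])
  then show ?thesis unfolding boundaries_def cycles_def .
qed

lemma telescope:
  fixes z b c :: "nat \<Rightarrow> int"
  assumes "z 0 = c 0" "\<And>m. c (Suc m) = b m + z (Suc m)"
  shows "(\<Sum>m\<le>N. (-1)^m * (z m - b m)) = (\<Sum>m\<le>N. (-1)^m * c m) - (-1)^N * b N"
proof (induction N)
  case 0
  then show ?case using assms(1) by (simp add: algebra_simps)
next
  case (Suc N)
  then show ?case using assms(2)[of N] by (simp add: algebra_simps)
qed

lemma euler_chains:
  fixes as :: "(nat \<Rightarrow> 'k::field) set list"
  shows "euler_coeff n as j = (\<Sum>m\<le>length as. (-1)^m * int (csv.dim (chains n as j m)))"
proof -
  define z where "z m = int (csv.dim (cycles n as j m))" for m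
  define b where "b m = int (csv.dim (boundaries n as j m))" for m
  define c where "c m = int (csv.dim (chains n as j m))" for m
  have "(\<Sum>m\<le>length as. (-1)^m * (z m - b m)) = (\<Sum>m\<le>length as. (-1)^m * c m) - (-1)^(length as) * b (length as)"
    by (rule telescope) (simp_all add: z_def b_def c_def cycles_0 rank_step)
  moreover have "b (length as) = 0" by (simp add: b_def boundaries_top csv_dim_zero)
  ultimately show ?thesis
    unfolding euler_coeff_def homology_dim_def z_def b_def c_def by simp
qed



lemma pcompose_X_power: "pcompose ([:0, 1:] ^ d) q = q ^ d"
  by (induction d) (simp_all add: pcompose_mult pcompose_pCons pcompose_1)

lemma coeff_one_one_power: "coeff ([:1, 1:] ^ d :: int poly) j = int (d choose j)"
proof (cases "j \<le> d")
  case True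
  then show ?thesis using coeff_linear_poly_power[of j d "1::int" 1] by simp
next
  case False
  then have "coeff ([:1, 1:] ^ d :: int poly) j = 0"
    by (intro coeff_eq_0) (simp add: degree_linear_power)
  then show ?thesis using False by simp
qed

lemma coeff_pcompose_monom: "coeff (pcompose (monom c d) [:1, 1:]) j = c * int (d choose j)"
  by (simp add: monom_altdef pcompose_smult pcompose_X_power coeff_one_one_power)

lemma alt_sum_Pow:
  assumes "finite A" "A \<noteq> {}"
  shows "(\<Sum>S\<in>Pow A. (-1::int) ^ card S) = 0"
proof (rule sum_alternating_cancels)
  show "finite (Pow A)" using assms by simp
  have "card {T. T \<subseteq> A \<and> {} \<subseteq> T \<and> even (card T)} = card {T. T \<subseteq> A \<and> {} \<subseteq> T \<and> odd (card T)}"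
    using assms by (intro card_subsupersets_even_odd) auto
  then show "card {x. x \<in> Pow A \<and> even (card x)} = card {x. x \<in> Pow A \<and> odd (card x)}" by simp
qed

lemma hyp_proper:
  assumes arr: "arrangement n as" and i: "i < length as"
  shows "\<exists>v\<in>ambient n. v \<notin> as ! i"
proof -
  have "hyperplane n (as ! i)" using arr i by (auto simp: arrangement_def)
  then obtain a where a: "a \<in> ambient n" "a \<noteq> 0" "as ! i = {v \<in> ambient n. (\<Sum>k<n. a k * v k) = 0}"
    unfolding hyperplane_def by blast
  obtain k where k: "a k \<noteq> 0" using a(2) by (auto simp: fun_eq_iff)
  have kn: "k < n"
  proof (rule ccontr)
    assume "\<not> k < n"
    then have "a k = 0" using a(1) by (simp add: ambient_def)
    with k show False by simp
  qed
  have "(\<Sum>l<n. a l * unitv k l) = (\<Sum>l<n. if l = k then a k else 0)"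
    by (intro sum.cong refl) (simp add: unitv_def)
  also have "\<dots> = a k" using kn by simp
  finally have "unitv k \<notin> as ! i" using k a(3) by simp
  then show ?thesis using unitv_ambient[OF kn] by blast
qed

lemma isect_empty: "isect n as {} = ambient n"
  by (simp add: isect_def)

lemma isect_ne:
  assumes arr: "arrangement n as" and S: "S \<subseteq> {..<length as}" "S \<noteq> {}"
  shows "isect n as S \<noteq> ambient n"
proof -
  obtain i where i: "i \<in> S" using S by blast
  then have "i < length as" using S by auto
  then obtain v where v: "v \<in> ambient n" "v \<notin> as ! i" using hyp_proper[OF arr] by blast
  then have "v \<notin> isect n as S" using i by (auto simp: isect_def)
  then show ?thesis using v by blast
qed

lemma sub_isect: "y \<subseteq> ambient n \<Longrightarrow> y \<subseteq> isect n as S \<longleftrightarrow> (\<forall>i\<in>S. y \<subseteq> as ! i)"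
  by (auto simp: isect_def)

lemma finite_lattice [simp]: "finite (lattice n as)"
  by (simp add: lattice_def)

lemma lattice_sub_ambient: "y \<in> lattice n as \<Longrightarrow> y \<subseteq> ambient n"
  by (auto simp: lattice_def isect_def)

definition mobP :: "nat \<Rightarrow> (nat \<Rightarrow> 'k::field) set list \<Rightarrow> ((nat \<Rightarrow> 'k) set \<Rightarrow> int) \<Rightarrow> bool" where
  "mobP n as m \<longleftrightarrow> (\<forall>y. y \<notin> lattice n as \<longrightarrow> m y = 0) \<and>
     (\<forall>y\<in>lattice n as. m y = (if y = ambient n then 1
        else - (\<Sum>z\<in>{z\<in>lattice n as. y \<subset> z}. m z)))"

lemma mobP_unique:
  assumes m1: "mobP n as m1" and m2: "mobP n as m2"
  shows "m1 = m2"
proof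
  fix y
  show "m1 y = m2 y"
  proof (induction y rule: measure_induct_rule[of "\<lambda>y. card {z\<in>lattice n as. y \<subset> z}"])
    case (less y)
    show ?case
    proof (cases "y \<in> lattice n as")
      case False
      then show ?thesis using m1 m2 by (simp add: mobP_def)
    next
      case True
      have "(\<Sum>z\<in>{z\<in>lattice n as. y \<subset> z}. m1 z) = (\<Sum>z\<in>{z\<in>lattice n as. y \<subset> z}. m2 z)"
      proof (rule sum.cong[OF refl])
        fix z assume z: "z \<in> {z\<in>lattice n as. y \<subset> z}"
        have "{z'\<in>lattice n as. z \<subset> z'} \<subset> {z'\<in>lattice n as. y \<subset> z'}"
          using z by auto
        then have "card {z'\<in>lattice n as. z \<subset> z'} < card {z'\<in>lattice n as. y \<subset> z'}"
          by (rule psubset_card_mono[rotated]) simp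
        then show "m1 z = m2 z" by (rule less)
      qed
      then show ?thesis using True m1 m2 unfolding mobP_def by simp
    qed
  qed
qed

definition mu' :: "nat \<Rightarrow> (nat \<Rightarrow> 'k::field) set list \<Rightarrow> (nat \<Rightarrow> 'k) set \<Rightarrow> int" where
  "mu' n as y = (if y \<in> lattice n as then (\<Sum>S\<in>{S\<in>Pow {..<length as}. isect n as S = y}. (-1) ^ card S) else 0)"

lemma mu'_upper:
  assumes arr: "arrangement n as" and y: "y \<in> lattice n as" "y \<noteq> ambient n"
  shows "(\<Sum>z\<in>{z\<in>lattice n as. y \<subseteq> z}. mu' n as z) = 0"
proof -
  let ?N = "length as"
  let ?SS = "{S\<in>Pow {..<?N}. y \<subseteq> isect n as S}"
  define A where "A = {i\<in>{..<?N}. y \<subseteq> as ! i}"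
  have yamb: "y \<subseteq> ambient n" using y(1) by (rule lattice_sub_ambient)
  have "(\<Sum>z\<in>{z\<in>lattice n as. y \<subseteq> z}. mu' n as z)
      = (\<Sum>z\<in>{z\<in>lattice n as. y \<subseteq> z}. \<Sum>S\<in>{S\<in>?SS. isect n as S = z}. (-1::int) ^ card S)"
  proof (rule sum.cong[OF refl])
    fix z assume z: "z \<in> {z\<in>lattice n as. y \<subseteq> z}"
    have "{S\<in>?SS. isect n as S = z} = {S\<in>Pow {..<?N}. isect n as S = z}" using z by auto
    then show "mu' n as z = (\<Sum>S\<in>{S\<in>?SS. isect n as S = z}. (-1::int) ^ card S)"
      using z by (simp add: mu'_def)
  qed
  also have "\<dots> = (\<Sum>S\<in>?SS. (-1::int) ^ card S)"
    by (rule sum.group) (auto simp: lattice_def)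
  also have "?SS = Pow A" using sub_isect[OF yamb] by (auto simp: A_def)
  also have "(\<Sum>S\<in>Pow A. (-1::int) ^ card S) = 0"
  proof (rule alt_sum_Pow)
    show "finite A" by (simp add: A_def)
    obtain T where T: "T \<subseteq> {..<?N}" "y = isect n as T" using y(1) by (auto simp: lattice_def)
    have "T \<noteq> {}" using T y(2) isect_empty by auto
    moreover have "T \<subseteq> A" using T sub_isect[OF yamb, of as T] by (auto simp: A_def)
    ultimately show "A \<noteq> {}" by blast
  qed
  finally show ?thesis .
qed

lemma mobP_mu':
  assumes arr: "arrangement n as"
  shows "mobP n as (mu' n as)"
  unfolding mobP_def
proof (intro conjI allI impI ballI)
  fix y assume "y \<notin> lattice n as"
  then show "mu' n as y = 0" by (simp add: mu'_def)
next
  fix y assume y: "y \<in> lattice n as"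
  show "mu' n as y = (if y = ambient n then 1 else - (\<Sum>z\<in>{z\<in>lattice n as. y \<subset> z}. mu' n as z))"
  proof (cases "y = ambient n")
    case True
    have "{S\<in>Pow {..<length as}. isect n as S = y} = {{}}"
      using True isect_ne[OF arr] isect_empty by auto
    then show ?thesis using True y by (simp add: mu'_def)
  next
    case False
    have "{z\<in>lattice n as. y \<subseteq> z} = insert y {z\<in>lattice n as. y \<subset> z}" using y by auto
    then have "mu' n as y + (\<Sum>z\<in>{z\<in>lattice n as. y \<subset> z}. mu' n as z) = 0"
      using mu'_upper[OF arr y False] by simp
    then show ?thesis using False by simp
  qed
qed

lemma mobius0_eq:
  assumes arr: "arrangement n as"
  shows "mobius0 n as = mu' n as"
proof -
  have "mobius0 n as = (THE m. mobP n as m)" by (simp add: mobius0_def mobP_def)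
  also have "\<dots> = mu' n as"
    by (rule the_equality[where P = "mobP n as", OF mobP_mu'[OF arr]]) (rule mobP_unique[OF _ mobP_mu'[OF arr]])
  finally show ?thesis .
qed



theorem proposition6:
  fixes n :: nat and as :: "(nat \<Rightarrow> 'k::field) set list"
  assumes "arrangement n as"
  shows "\<forall>j. euler_coeff n as j = coeff (pcompose (char_poly n as) [:1, 1:]) j"
proof
  fix j
  let ?N = "length as"
  let ?L = "lattice n as"
  define h where "h S = (-1::int) ^ card S * int (subspace_dim (isect n as S) choose j)" for S
  have e1: "euler_coeff n as j = (\<Sum>m\<le>?N. (-1)^m * int (\<Sum>S\<in>Xm ?N m. subspace_dim (isect n as S) choose j))"
  proof -
    have "csv.dim (chains n as j m) = (\<Sum>S\<in>Xm ?N m. subspace_dim (isect n as S) choose j)" for m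
      using chains_props[of n as j m] by blast
    then show ?thesis using euler_chains[of n as j] by simp
  qed
  have e2: "(\<Sum>m\<le>?N. (-1)^m * int (\<Sum>S\<in>Xm ?N m. subspace_dim (isect n as S) choose j)) = (\<Sum>S\<in>Pow {..<?N}. h S)"
  proof -
    have "(\<Sum>S\<in>Pow {..<?N}. h S) = (\<Sum>m\<in>{..?N}. \<Sum>S\<in>{S\<in>Pow {..<?N}. card S = m}. h S)"
    proof (rule sum.group[symmetric])
      show "card ` Pow {..<?N} \<subseteq> {..?N}"
        using card_mono[OF finite_lessThan] by fastforce
    qed simp_all
    also have "\<dots> = (\<Sum>m\<le>?N. (-1)^m * int (\<Sum>S\<in>Xm ?N m. subspace_dim (isect n as S) choose j))"
    proof (rule sum.cong[OF refl])
      fix m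
      have "{S\<in>Pow {..<?N}. card S = m} = Xm ?N m" by (auto simp: Xm_def)
      moreover have "(\<Sum>S\<in>Xm ?N m. h S) = (-1)^m * int (\<Sum>S\<in>Xm ?N m. subspace_dim (isect n as S) choose j)"
        by (simp add: h_def sum_distrib_left Xm_def)
      ultimately show "(\<Sum>S\<in>{S\<in>Pow {..<?N}. card S = m}. h S) = (-1)^m * int (\<Sum>S\<in>Xm ?N m. subspace_dim (isect n as S) choose j)"
        by simp
    qed
    finally show ?thesis by simp
  qed
  have e3: "(\<Sum>S\<in>Pow {..<?N}. h S) = (\<Sum>x\<in>?L. mu' n as x * int (subspace_dim x choose j))"
  proof -
    have "(\<Sum>S\<in>Pow {..<?N}. h S) = (\<Sum>x\<in>?L. \<Sum>S\<in>{S\<in>Pow {..<?N}. isect n as S = x}. h S)"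
      by (rule sum.group[symmetric]) (auto simp: lattice_def)
    also have "\<dots> = (\<Sum>x\<in>?L. mu' n as x * int (subspace_dim x choose j))"
    proof (rule sum.cong[OF refl])
      fix x assume x: "x \<in> ?L"
      have "(\<Sum>S\<in>{S\<in>Pow {..<?N}. isect n as S = x}. h S)
          = (\<Sum>S\<in>{S\<in>Pow {..<?N}. isect n as S = x}. (-1::int) ^ card S * int (subspace_dim x choose j))"
        by (rule sum.cong[OF refl]) (simp add: h_def)
      also have "\<dots> = mu' n as x * int (subspace_dim x choose j)"
        using x by (simp add: mu'_def sum_distrib_right)
      finally show "(\<Sum>S\<in>{S\<in>Pow {..<?N}. isect n as S = x}. h S) = mu' n as x * int (subspace_dim x choose j)" .
    qed
    finally show ?thesis .
  qed
  have e4: "coeff (pcompose (char_poly n as) [:1, 1:]) j = (\<Sum>x\<in>?L. mobius0 n as x * int (subspace_dim x choose j))"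
    by (simp add: char_poly_def pcompose_sum coeff_sum coeff_pcompose_monom)
  show "euler_coeff n as j = coeff (pcompose (char_poly n as) [:1, 1:]) j"
    using e1 e2 e3 e4 mobius0_eq[OF assms] by simp
qed


end
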